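(* Let $H$ be a complex separable Hilbert space and let $S\in B(H)$ have Cartesian decomposition $S=A+iC$ ($A,C$ self-adjoint) with $A$ and $C$ positive. Then $$\|S^*S-SS^*\|\le \frac12\left(\|A\|^2+\|C\|^2\right).$$
   Context: $B(H)$ denotes the algebra of bounded linear operators on $H$ with the operator norm. The Cartesian decomposition of $S\in B(H)$ is $S=A+iC$ with $A=\frac{S+S^*}{2}$ and $C=\frac{S-S^*}{2i}$ self-adjoint. *)

theory Defs
  imports "HOL-Analysis.Analysis"
begin

text \<open>A complex Hilbert space is modelled as its underlying real Hilbert space
  (a type of class real_inner and complete_space) together with an orthogonal
  complex structure J (multiplication by the imaginary unit).\<close>

definition complex_structure :: "('a::real_inner \<Rightarrow> 'a) \<Rightarrow> bool" where
  "complex_structure J \<longleftrightarrow> linear J \<and> (\<forall>x. J (J x) = - x) \<and> (\<forall>x y. inner (J x) (J y) = inner x y)"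

text \<open>Complex scalar multiplication and the complex inner product
  (conjugate-linear in the first, linear in the second argument).\<close>

definition cscale :: "('a::real_inner \<Rightarrow> 'a) \<Rightarrow> complex \<Rightarrow> 'a \<Rightarrow> 'a" where
  "cscale J c x = Re c *\<^sub>R x + Im c *\<^sub>R J x"

definition cinner :: "('a::real_inner \<Rightarrow> 'a) \<Rightarrow> 'a \<Rightarrow> 'a \<Rightarrow> complex" where
  "cinner J x y = Complex (inner x y) (- inner x (J y))"

definition bounded_op :: "('a::real_inner \<Rightarrow> 'a) \<Rightarrow> ('a \<Rightarrow> 'a) \<Rightarrow> bool" where
  "bounded_op J T \<longleftrightarrow> bounded_linear T \<and> (\<forall>c x. T (cscale J c x) = cscale J c (T x))"

definition cadjoint :: "('a::real_inner \<Rightarrow> 'a) \<Rightarrow> ('a \<Rightarrow> 'a) \<Rightarrow> ('a \<Rightarrow> 'a)" where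
  "cadjoint J T = (THE T'. \<forall>x y. cinner J (T x) y = cinner J x (T' y))"

definition self_adjoint :: "('a::real_inner \<Rightarrow> 'a) \<Rightarrow> ('a \<Rightarrow> 'a) \<Rightarrow> bool" where
  "self_adjoint J T \<longleftrightarrow> bounded_op J T \<and> cadjoint J T = T"

definition positive_op :: "('a::real_inner \<Rightarrow> 'a) \<Rightarrow> ('a \<Rightarrow> 'a) \<Rightarrow> bool" where
  "positive_op J T \<longleftrightarrow> (\<forall>x. Im (cinner J (T x) x) = 0 \<and> Re (cinner J (T x) x) \<ge> 0)"

definition separable_space :: "'a::metric_space itself \<Rightarrow> bool" where
  "separable_space _ \<longleftrightarrow> (\<exists>D::'a set. countable D \<and> closure D = UNIV)"

end

theory Submission
  imports Defs
begin

lemma quad_cs: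
  fixes p b q :: real
  assumes all: "\<And>t. 0 \<le> p + 2*t*b + t^2*q" and p: "0 \<le> p" and q: "0 \<le> q"
  shows "b^2 \<le> p * q"
proof (cases "q = 0")
  case True
  show ?thesis
  proof (rule ccontr)
    assume "\<not> ?thesis"
    then have "b \<noteq> 0" using True by auto
    have "0 \<le> p + 2*(-(p+1)/(2*b))*b + (-(p+1)/(2*b))^2*q" by (rule all)
    also have "\<dots> = -1" using True \<open>b \<noteq> 0\<close> by (simp add: field_simps)
    finally show False by simp
  qed
next
  case False
  then have qp: "q > 0" using q by simp
  have "0 \<le> p + 2*(-b/q)*b + (-b/q)^2*q" by (rule all)
  also have "\<dots> = p - b^2/q" using qp by (simp add: field_simps power2_eq_square)
  finally have "b^2/q \<le> p" by simp
  then show ?thesis using qp by (simp add: field_simps mult.commute)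
qed

lemma pos_cs:
  fixes A :: "'a::real_inner \<Rightarrow> 'a"
  assumes lin: "linear A" and sym: "\<And>x y. inner (A x) y = inner x (A y)"
    and pos: "\<And>x. inner (A x) x \<ge> 0"
  shows "(inner (A u) v)^2 \<le> inner (A u) u * inner (A v) v"
proof (rule quad_cs)
  fix t :: real
  have "0 \<le> inner (A (u + t *\<^sub>R v)) (u + t *\<^sub>R v)" by (rule pos)
  also have "\<dots> = inner (A u) u + 2*t*inner (A u) v + t^2 * inner (A v) v"
  proof -
    have s: "inner (A v) u = inner (A u) v" using sym[of v u] by (simp add: inner_commute)
    show ?thesis
      by (simp add: linear_add[OF lin] linear_scale[OF lin] inner_add_left inner_add_right
          s power2_eq_square algebra_simps)
  qed
  finally show "0 \<le> inner (A u) u + 2*t*inner (A u) v + t^2 * inner (A v) v" .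
qed (use pos in auto)

lemma half_bound:
  fixes A :: "'a::real_inner \<Rightarrow> 'a"
  assumes bl: "bounded_linear A" and sym: "\<And>x y. inner (A x) y = inner x (A y)"
    and pos: "\<And>x. inner (A x) x \<ge> 0"
  shows "norm (A u - (onorm A / 2) *\<^sub>R u) \<le> onorm A / 2 * norm u"
proof -
  define a where "a = onorm A"
  have lin: "linear A" using bl bounded_linear.linear by blast
  have a0: "0 \<le> a" unfolding a_def by (rule onorm_pos_le[OF bl])
  have nb: "\<And>x. norm (A x) \<le> a * norm x" unfolding a_def by (rule onorm[OF bl])
  define n where "n = norm (A u)"
  have n0: "0 \<le> n" unfolding n_def by simp
  have key: "n^2 \<le> a * inner (A u) u"
  proof (cases "n = 0")
    case True then show ?thesis using a0 pos[of u] by simp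
  next
    case False
    then have npos: "n > 0" using n0 by simp
    have "(n^2)^2 = (inner (A u) (A u))^2" unfolding n_def by (simp add: power2_norm_eq_inner)
    also have "\<dots> \<le> inner (A u) u * inner (A (A u)) (A u)" by (rule pos_cs[OF lin sym pos])
    also have "\<dots> \<le> inner (A u) u * (a * n^2)"
    proof (rule mult_left_mono[OF _ pos])
      have "inner (A (A u)) (A u) \<le> norm (A (A u)) * norm (A u)" by (rule norm_cauchy_schwarz)
      also have "\<dots> \<le> (a * n) * n" unfolding n_def
        by (rule mult_right_mono[OF nb], simp)
      finally show "inner (A (A u)) (A u) \<le> a * n^2" by (simp add: power2_eq_square mult.assoc)
    qed
    finally have "n^2 * n^2 \<le> (a * inner (A u) u) * n^2" by (simp add: power2_eq_square algebra_simps)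
    moreover have "n^2 > 0" using npos by simp
    ultimately show ?thesis using mult_right_le_imp_le by blast
  qed
  have "(norm (A u - (a / 2) *\<^sub>R u))^2 = n^2 - a * inner (A u) u + (a/2)^2 * (norm u)^2"
    unfolding n_def power2_norm_eq_inner
    by (simp add: inner_diff_left inner_diff_right inner_commute power2_eq_square algebra_simps)
  also have "\<dots> \<le> (a/2 * norm u)^2" using key by (simp only: power_mult_distrib)
  finally have "(norm (A u - (a / 2) *\<^sub>R u))^2 \<le> (a/2 * norm u)^2" .
  then show ?thesis unfolding a_def[symmetric] by (rule power2_le_imp_le) (simp add: a0)
qed

lemma sym_from_pos:
  fixes J A :: "'a::real_inner \<Rightarrow> 'a"
  assumes linJ: "linear J" and JJ: "\<And>x. J (J x) = - x" and Jin: "\<And>x y. inner (J x) (J y) = inner x y"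
    and lin: "linear A" and comm: "\<And>x. A (J x) = J (A x)"
    and pos: "\<And>x. inner (A x) (J x) = 0"
  shows "inner (A x) y = inner x (A y)"
proof -
  have p: "inner (A x) (J y) + inner (A y) (J x) = 0" for x y
  proof -
    have "0 = inner (A (x + y)) (J (x + y))" using pos by simp
    also have "\<dots> = inner (A x) (J x) + inner (A x) (J y) + inner (A y) (J x) + inner (A y) (J y)"
      by (simp add: linear_add[OF lin] linear_add[OF linJ] inner_add_left inner_add_right)
    finally show ?thesis using pos[of x] pos[of y] by simp
  qed
  have "inner (A x) (J (J y)) + inner (A (J y)) (J x) = 0" by (rule p)
  then have "- inner (A x) y + inner (A y) x = 0" by (simp add: JJ comm Jin)
  then show ?thesis by (simp add: inner_commute)
qed

theorem mainTheorem3: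
  fixes J S A C :: "'a::{real_inner, complete_space} \<Rightarrow> 'a"
  assumes "complex_structure J"
    and "separable_space TYPE('a)"
    and "bounded_op J S"
    and "self_adjoint J A" and "self_adjoint J C"
    and "\<And>x. S x = A x + J (C x)"
    and "positive_op J A" and "positive_op J C"
  shows "onorm (\<lambda>x. cadjoint J S (S x) - S (cadjoint J S x))
           \<le> (1/2) * ((onorm A)\<^sup>2 + (onorm C)\<^sup>2)"
proof -
  note cs = assms(1)[unfolded complex_structure_def]
  have linJ: "linear J" and JJ: "\<And>x. J (J x) = - x" and Jin: "\<And>x y. inner (J x) (J y) = inner x y"
    using cs by auto
  have blA: "bounded_linear A" and blC: "bounded_linear C"
    using assms(4,5) unfolding self_adjoint_def bounded_op_def by auto
  have linA: "linear A" and linC: "linear C" using blA blC bounded_linear.linear by blast+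
  have csi: "cscale J \<i> x = J x" for x unfolding cscale_def by simp
  have commA: "A (J x) = J (A x)" for x
    using assms(4) unfolding self_adjoint_def bounded_op_def by (metis csi)
  have commC: "C (J x) = J (C x)" for x
    using assms(5) unfolding self_adjoint_def bounded_op_def by (metis csi)
  have posA: "inner (A x) (J x) = 0" "inner (A x) x \<ge> 0" for x
    using assms(7) unfolding positive_op_def cinner_def by (auto simp: spec[of _ x])
  have posC: "inner (C x) (J x) = 0" "inner (C x) x \<ge> 0" for x
    using assms(8) unfolding positive_op_def cinner_def by (auto simp: spec[of _ x])
  have symA: "inner (A x) y = inner x (A y)" for x y
    by (rule sym_from_pos[OF linJ JJ Jin linA commA posA(1)])
  have symC: "inner (C x) y = inner x (C y)" for x y
    by (rule sym_from_pos[OF linJ JJ Jin linC commC posC(1)])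
  have Jskew: "inner (J u) v = - inner u (J v)" for u v
    using Jin[of "J u" v] by (simp add: JJ)
  define T where "T y = A y - J (C y)" for y
  have adj: "cinner J (S x) y = cinner J x (T y)" for x y
  proof -
    have r: "inner (S x) y = inner x (T y)" for x y
    proof -
      have "inner (J (C x)) y = - inner x (J (C y))"
        by (simp add: Jskew symC commC)
      then show ?thesis unfolding T_def assms(6)
        by (simp add: inner_add_left inner_diff_right symA)
    qed
    have "inner (S x) (J y) = inner x (T (J y))" by (rule r)
    moreover have "T (J y) = J (T y)" unfolding T_def
      by (simp add: commA commC linear_diff[OF linJ])
    ultimately show ?thesis unfolding cinner_def using r[of x y] by simp
  qed
  have adjS: "cadjoint J S = T"
    unfolding cadjoint_def
  proof (rule the_equality)
    show "\<forall>x y. cinner J (S x) y = cinner J x (T y)" using adj by blast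
  next
    fix T' assume h: "\<forall>x y. cinner J (S x) y = cinner J x (T' y)"
    show "T' = T"
    proof
      fix y
      have "inner x (T' y - T y) = 0" for x
        using arg_cong[OF h[rule_format, of x y], of Re] adj[of x y]
        by (simp add: cinner_def inner_diff_right)
      from this[of "T' y - T y"] show "T' y = T y" by simp
    qed
  qed
  define a where "a = onorm A"
  define c where "c = onorm C"
  have a0: "0 \<le> a" unfolding a_def by (rule onorm_pos_le[OF blA])
  have c0: "0 \<le> c" unfolding c_def by (rule onorm_pos_le[OF blC])
  have hA: "norm (A u - (a/2) *\<^sub>R u) \<le> a/2 * norm u" for u
    unfolding a_def by (rule half_bound[OF blA symA posA(2)])
  have hC: "norm (C u - (c/2) *\<^sub>R u) \<le> c/2 * norm u" for u
    unfolding c_def by (rule half_bound[OF blC symC posC(2)])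
  define A' where "A' u = A u - (a/2) *\<^sub>R u" for u
  define C' where "C' u = C u - (c/2) *\<^sub>R u" for u
  have hA': "norm (A' u) \<le> a/2 * norm u" for u unfolding A'_def by (rule hA)
  have hC': "norm (C' u) \<le> c/2 * norm u" for u unfolding C'_def by (rule hC)
  have comm_eq: "A (C x) - C (A x) = A' (C' x) - C' (A' x)" for x
    unfolding A'_def C'_def
    by (simp add: linear_diff[OF linA] linear_diff[OF linC] linear_scale[OF linA] linear_scale[OF linC]
        algebra_simps)
  have AC: "norm (A' (C' x)) \<le> a/2 * (c/2 * norm x)" for x
    using order_trans[OF hA'[of "C' x"] mult_left_mono[OF hC'[of x]]] a0 by simp
  have CA: "norm (C' (A' x)) \<le> c/2 * (a/2 * norm x)" for x
    using order_trans[OF hC'[of "A' x"] mult_left_mono[OF hA'[of x]]] c0 by simp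
  have commb: "norm (A (C x) - C (A x)) \<le> a * c / 2 * norm x" for x
  proof -
    have "norm (A (C x) - C (A x)) \<le> norm (A' (C' x)) + norm (C' (A' x))"
      unfolding comm_eq by (rule norm_triangle_ineq4)
    also have "\<dots> \<le> a/2 * (c/2 * norm x) + c/2 * (a/2 * norm x)" using AC CA add_mono by blast
    finally show ?thesis by (simp add: algebra_simps)
  qed
  have Jn: "norm (J u) = norm u" for u using Jin[of u u] by (simp add: norm_eq_sqrt_inner)
  have diff: "T (S x) - S (T x) = 2 *\<^sub>R J (A (C x) - C (A x))" for x
    unfolding T_def assms(6)
    by (simp add: linear_diff[OF linA] linear_diff[OF linC] linear_diff[OF linJ]
        linear_add[OF linA] linear_add[OF linC] linear_add[OF linJ] linear_scale[OF linJ]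
        commA commC JJ scaleR_2 algebra_simps)
  have "onorm (\<lambda>x. cadjoint J S (S x) - S (cadjoint J S x)) \<le> a * c"
    unfolding adjS
  proof (rule onorm_bound)
    show "0 \<le> a * c" using a0 c0 by simp
  next
    fix x
    have "norm (T (S x) - S (T x)) = 2 * norm (A (C x) - C (A x))" unfolding diff by (simp add: Jn)
    also have "\<dots> \<le> a * c * norm x" using commb[of x] by simp
    finally show "norm (T (S x) - S (T x)) \<le> a * c * norm x" .
  qed
  also have "a * c \<le> (1/2) * (a^2 + c^2)"
    using sum_squares_bound[of a c] by (simp add: power2_eq_square algebra_simps)
  finally show ?thesis unfolding a_def c_def .
qed

end
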